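(* Let $a\in \mathcal{A}^d$ and $x\in\mathcal{A}$. Then the following are equivalent: (1) $a\in \mathcal{A}^{\mathrm{gcEP}}$ and $a^{\mathrm{gcEP}}=x$. (2) $xax=x$, $(ax)^*=ax$, $(xa-1)a^d=0$ and $im(x)\subseteq im(a^d)$. (3) $xax=x$, $\ell(x)=\ell(x^* )=\ell(a^d)$.
   Context: $\mathcal{A}$ is a complex Banach *-algebra with identity. $\mathcal{A}^{qnil}$ is the set of quasinilpotent elements ($\lim_n\|a^n\|^{1/n}=0$). $a\in\mathcal{A}^d$ means $a$ has a generalized Drazin inverse $a^d$, i.e. $a^d$ satisfies $a(a^d)^2=a^d$, $aa^d=a^da$, $a-a^2a^d\in\mathcal{A}^{qnil}$. An element $a$ has a generalized core-EP inverse if there is $x\in\mathcal{A}$ with $x=ax^2$, $(ax)^*=ax$, $\lim_{n\to\infty}\|a^n-xa^{n+1}\|^{1/n}=0$; such $x$ is unique and is denoted $a^{\mathrm{gcEP}}$, and $\mathcal{A}^{\mathrm{gcEP}}$ denotes the set of such elements. $\ell(\cdot)$ denotes the left annihilator, and $im(y)$ denotes the image (principal right ideal) $y\mathcal{A}$. *)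

theory Defs
  imports "HOL-Analysis.Analysis"
begin

class complex_banach_star_algebra = banach + real_normed_algebra_1 +
  fixes cscale :: "complex \<Rightarrow> 'a \<Rightarrow> 'a"
    and invol :: "'a \<Rightarrow> 'a"
  assumes cscale_of_real: "cscale (complex_of_real r) x = scaleR r x"
    and cscale_add_left: "cscale (c + d) x = cscale c x + cscale d x"
    and cscale_add_right: "cscale c (x + y) = cscale c x + cscale c y"
    and cscale_mult: "cscale (c * d) x = cscale c (cscale d x)"
    and cscale_norm: "norm (cscale c x) = cmod c * norm x"
    and cscale_mult_left: "cscale c (x * y) = cscale c x * y"
    and cscale_mult_right: "cscale c (x * y) = x * cscale c y"
    and invol_invol: "invol (invol x) = x"
    and invol_add: "invol (x + y) = invol x + invol y"
    and invol_mult: "invol (x * y) = invol y * invol x"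
    and invol_cscale: "invol (cscale c x) = cscale (cnj c) (invol x)"

definition qnil :: "'a::real_normed_algebra_1 \<Rightarrow> bool" where
  "qnil a \<longleftrightarrow> (\<lambda>n. root n (norm (a ^ n))) \<longlonglongrightarrow> 0"

definition is_gDrazin :: "'a::real_normed_algebra_1 \<Rightarrow> 'a \<Rightarrow> bool" where
  "is_gDrazin a y \<longleftrightarrow> a * y ^ 2 = y \<and> a * y = y * a \<and> qnil (a - a ^ 2 * y)"

definition has_gDrazin :: "'a::real_normed_algebra_1 \<Rightarrow> bool" where
  "has_gDrazin a \<longleftrightarrow> (\<exists>y. is_gDrazin a y)"

definition gDrazin :: "'a::real_normed_algebra_1 \<Rightarrow> 'a" where
  "gDrazin a = (THE y. is_gDrazin a y)"

definition is_gcEP :: "'a::complex_banach_star_algebra \<Rightarrow> 'a \<Rightarrow> bool" where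
  "is_gcEP a x \<longleftrightarrow> x = a * x ^ 2 \<and> invol (a * x) = a * x \<and>
     (\<lambda>n. root n (norm (a ^ n - x * a ^ (n + 1)))) \<longlonglongrightarrow> 0"

definition has_gcEP :: "'a::complex_banach_star_algebra \<Rightarrow> bool" where
  "has_gcEP a \<longleftrightarrow> (\<exists>x. is_gcEP a x)"

definition gcEP :: "'a::complex_banach_star_algebra \<Rightarrow> 'a" where
  "gcEP a = (THE x. is_gcEP a x)"

definition lann :: "'a::ring \<Rightarrow> 'a set" where
  "lann y = {z. z * y = 0}"

definition im :: "'a::ring \<Rightarrow> 'a set" where
  "im y = {y * z | z. True}"

end

theory Submission
  imports Defs
begin

lemma small_zero:
  fixes w :: "'a::real_normed_vector" and r :: "nat \<Rightarrow> real"
  assumes lim: "(\<lambda>n. root n (r n)) \<longlonglongrightarrow> 0" and r0: "\<And>n. r n \<ge> 0"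
    and C: "C \<ge> 0" and D: "D \<ge> 0"
    and bd: "\<And>n. n \<ge> 1 \<Longrightarrow> norm w \<le> C * D^n * r n"
  shows "w = 0"
proof -
  define t where "t = 1 / (2*(D+1))"
  have t0: "t > 0" using D by (simp add: t_def)
  have Dt: "D * t \<le> 1/2" using D by (simp add: t_def field_simps)
  have ev: "eventually (\<lambda>n. root n (r n) < t) sequentially"
    using lim t0 by (simp add: order_tendsto_iff)
  have ev2: "eventually (\<lambda>n. C * (1/2)^n \<ge> norm w) sequentially"
    using ev eventually_ge_at_top[of 1]
  proof eventually_elim
    case (elim n)
    have rn: "r n = root n (r n) ^ n" using elim r0[of n] by simp
    have "root n (r n) ^ n \<le> t^n"
      by (rule power_mono) (use elim r0[of n] in auto)
    with rn have rt: "r n \<le> t^n" by simp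
    have "norm w \<le> C * D^n * r n" using bd elim by auto
    also have "\<dots> \<le> C * D^n * t^n" using rt C D by (simp add: mult_left_mono)
    also have "\<dots> = C * (D*t)^n" by (simp add: power_mult_distrib)
    also have "\<dots> \<le> C * (1/2)^n" using Dt C D t0 by (simp add: mult_left_mono power_mono)
    finally show ?case .
  qed
  have "(\<lambda>n. C * (1/2::real)^n) \<longlonglongrightarrow> 0"
    by (intro tendsto_mult_right_zero LIMSEQ_power_zero) simp
  then have "norm w \<le> 0" using ev2 by (rule tendsto_lowerbound) simp
  then show ?thesis by simp
qed

lemma root_bound:
  fixes r s :: "nat \<Rightarrow> real"
  assumes lim: "(\<lambda>n. root n (r n)) \<longlonglongrightarrow> 0" and r0: "\<And>n. r n \<ge> 0" and C: "C > 0"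
   and bd: "\<And>n. n \<ge> 1 \<Longrightarrow> s n \<le> C * r n" and s0: "\<And>n. s n \<ge> 0"
  shows "(\<lambda>n. root n (s n)) \<longlonglongrightarrow> 0"
proof (rule tendsto_sandwich[of "\<lambda>n. 0" _ _ "\<lambda>n. root n C * root n (r n)"])
  show "eventually (\<lambda>n. 0 \<le> root n (s n)) sequentially" using s0 by (simp add: real_root_ge_zero)
  show "eventually (\<lambda>n. root n (s n) \<le> root n C * root n (r n)) sequentially"
    using eventually_ge_at_top[of 1]
  proof eventually_elim
    case (elim n)
    have "root n (s n) \<le> root n (C * r n)" using elim bd by simp
    then show ?case by (simp add: real_root_mult)
  qed
  show "(\<lambda>n. 0::real) \<longlonglongrightarrow> 0" by simp
  show "(\<lambda>n. root n C * root n (r n)) \<longlonglongrightarrow> 0"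
    using tendsto_mult[OF LIMSEQ_root_const[OF C] lim] by simp
qed

lemma comm_pow: fixes a b :: "'a::ring_1"
  assumes "a*b = b*a" shows "a * b^n = b^n * a"
proof (induction n)
  case 0 then show ?case by simp
next
  case (Suc n)
  have "a * b^Suc n = (a*b)*b^n" by (simp add: mult.assoc)
  also have "\<dots> = b*(a*b^n)" by (simp add: assms mult.assoc)
  also have "\<dots> = b^Suc n * a" using Suc by (simp add: mult.assoc)
  finally show ?case .
qed

lemma pow_mult_comm: fixes a b :: "'a::ring_1"
  assumes "a*b = b*a" shows "(a*b)^n = a^n * b^n"
proof (induction n)
  case 0 then show ?case by simp
next
  case (Suc n)
  have "(a*b)^Suc n = a*b*(a^n*b^n)" using Suc by (simp add: mult.assoc)
  also have "\<dots> = a*(b*a^n)*b^n" by (simp add: mult.assoc)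
  also have "\<dots> = a*(a^n*b)*b^n" using comm_pow[of b a n] assms by simp
  also have "\<dots> = a^Suc n * b^Suc n" by (simp add: mult.assoc)
  finally show ?case .
qed

lemma idem_pow: fixes e :: "'a::ring_1"
  assumes "e*e = e" "1 \<le> n" shows "e^n = e"
  using assms(2)
proof (induction n rule: dec_induct)
  case base then show ?case by simp
next
  case (step n) then show ?case using assms(1) by (simp add: power_Suc)
qed

lemma drazin_facts:
  fixes a d :: "'a::real_normed_algebra_1"
  assumes "is_gDrazin a d"
  shows "a*d = d*a" "(a*d)*(a*d) = a*d" "d*(a*d) = d" "(a*d)*d = d"
    "a*(a*d) = (a*d)*a" "qnil (a*(1 - a*d))"
    "\<And>n. 1 \<le> n \<Longrightarrow> (a*(1 - a*d))^n = a^n*(1 - a*d)"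
    "\<And>n. 1 \<le> n \<Longrightarrow> (a*(1 - a*d))^n = (1 - a*d)*a^n"
    "\<And>n. 1 \<le> n \<Longrightarrow> a*d = a^n*d^n"
    "\<And>n. a^n*(a*d) = (a*d)*a^n"
proof -
  have 1: "a*(d*d) = d" "a*d = d*a" "qnil (a - a^2*d)" using assms
    by (auto simp: is_gDrazin_def power2_eq_square)
  show c: "a*d = d*a" by (fact 1(2))
  show e: "(a*d)*(a*d) = a*d"
    by (metis "1"(1) c mult.assoc)
  show "d*(a*d) = d" by (metis "1"(1) c mult.assoc)
  show "(a*d)*d = d" by (metis "1"(1) mult.assoc)
  show ca: "a*(a*d) = (a*d)*a" by (metis c mult.assoc)
  have u: "a - a^2*d = a*(1 - a*d)" by (simp add: power2_eq_square algebra_simps)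
  show "qnil (a*(1 - a*d))" using 1(3) u by simp
  have ca': "a*(1-a*d) = (1-a*d)*a" using ca by (simp add: algebra_simps)
  have e': "(1-a*d)*(1-a*d) = 1-a*d" using e by (simp add: algebra_simps)
  show "(a*(1 - a*d))^n = a^n*(1 - a*d)" if "1 \<le> n" for n
    using pow_mult_comm[OF ca', of n] idem_pow[OF e' that] by simp
  show "(a*(1 - a*d))^n = (1 - a*d)*a^n" if "1 \<le> n" for n
    using pow_mult_comm[OF ca', of n] idem_pow[OF e' that] comm_pow[OF ca'[symmetric], of n]
    by simp
  show "a*d = a^n*d^n" if "1 \<le> n" for n
    using pow_mult_comm[OF c, of n] idem_pow[OF e that] by simp
  show "a^n*(a*d) = (a*d)*a^n" for n
    using comm_pow[OF ca[symmetric], of n] by simp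
qed

lemma gDrazin_unique:
  fixes a y z :: "'a::real_normed_algebra_1"
  assumes Y: "is_gDrazin a y" and Z: "is_gDrazin a z"
  shows "y = z"
proof -
  note fy = drazin_facts[OF Y] and fz = drazin_facts[OF Z]
  define p where "p = a*y"
  define q where "q = a*z"
  have "p*(1-q) = 0"
  proof (rule small_zero[where r="\<lambda>n. norm ((a*(1-q))^n)" and C=1 and D="norm y"])
    show "(\<lambda>n. root n (norm ((a*(1-q))^n))) \<longlonglongrightarrow> 0" using fz(6) by (simp add: qnil_def q_def)
    fix n :: nat assume n: "1 \<le> n"
    have "a^n*y^n = y^n*a^n" using pow_mult_comm[OF fy(1), of n] pow_mult_comm[OF fy(1)[symmetric], of n]
      fy(1) by simp
    then have "p*(1-q) = y^n*a^n*(1-q)" using fy(9)[OF n] by (simp add: p_def)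
    also have "\<dots> = y^n*(a*(1-q))^n" using fz(7)[OF n] by (simp add: q_def mult.assoc)
    finally have "norm (p*(1-q)) \<le> norm (y^n) * norm ((a*(1-q))^n)"
      by (simp add: norm_mult_ineq)
    also have "\<dots> \<le> norm y ^n * norm ((a*(1-q))^n)"
      by (simp add: mult_right_mono norm_power_ineq)
    finally show "norm (p*(1-q)) \<le> 1 * norm y ^n * norm ((a*(1-q))^n)" by simp
  qed simp_all
  have "(1-p)*q = 0"
  proof (rule small_zero[where r="\<lambda>n. norm ((a*(1-p))^n)" and C=1 and D="norm z"])
    show "(\<lambda>n. root n (norm ((a*(1-p))^n))) \<longlonglongrightarrow> 0" using fy(6) by (simp add: qnil_def p_def)
    fix n :: nat assume n: "1 \<le> n"
    have "(1-p)*q = (1-p)*a^n*z^n" using fz(9)[OF n] by (simp add: q_def mult.assoc)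
    also have "\<dots> = (a*(1-p))^n * z^n" using fy(8)[OF n] by (simp add: p_def)
    finally have "norm ((1-p)*q) \<le> norm ((a*(1-p))^n) * norm (z^n)"
      by (simp add: norm_mult_ineq)
    also have "\<dots> \<le> norm ((a*(1-p))^n) * norm z ^n"
      by (simp add: mult_left_mono norm_power_ineq)
    finally show "norm ((1-p)*q) \<le> 1 * norm z ^n * norm ((a*(1-p))^n)" by (simp add: mult.commute)
  qed simp_all
  have pq: "p = q" using \<open>p*(1-q) = 0\<close> \<open>(1-p)*q = 0\<close> by (simp add: algebra_simps)
  have "y = y*p" using fy(3) by (simp add: p_def)
  also have "\<dots> = y*a*z" by (simp add: pq q_def mult.assoc)
  also have "\<dots> = q*z" using fy(1) by (simp add: pq[symmetric] p_def)
  also have "\<dots> = z" using fz(4) by (simp add: q_def)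
  finally show ?thesis .
qed

lemma gcEP_to_2:
  fixes a x d :: "'a::complex_banach_star_algebra"
  assumes D: "is_gDrazin a d" and X: "is_gcEP a x"
  shows "x*a*x = x \<and> invol (a*x) = a*x \<and> (x*a - 1)*d = 0 \<and> x = (a*d)*x"
proof -
  note f = drazin_facts[OF D]
  have X': "x = a*(x*x) \<and> invol (a*x) = a*x \<and>
     (\<lambda>n. root n (norm (a ^ n - x * a ^ (n + 1)))) \<longlonglongrightarrow> 0"
    using X unfolding is_gcEP_def power2_eq_square .
  note x2 = conjunct1[OF X'] and sa = conjunct1[OF conjunct2[OF X']]
    and lim = conjunct2[OF conjunct2[OF X']]
  have xpow: "x = a^n * x^(n+1)" for n
  proof (induction n)
    case 0 then show ?case by simp
  next
    case (Suc n)
    have xs: "x^(Suc n+1) = (x*x)*x^n" by (simp add: mult.assoc)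
    have "a^Suc n * x^(Suc n+1) = a^n*a*((x*x)*x^n)" by (simp only: xs power_Suc2)
    also have "\<dots> = a^n * ((a*(x*x))*x^n)" by (simp add: mult.assoc)
    also have "\<dots> = a^n * x^(n+1)" by (simp only: x2[symmetric] power_Suc Suc_eq_plus1[symmetric])
    finally have eq: "a^Suc n * x^(Suc n+1) = a^n * x^(n+1)" .
    show ?case by (rule trans[OF Suc.IH eq[symmetric]])
  qed
  have ex: "(1-a*d)*x = 0"
  proof (rule small_zero[where r="\<lambda>n. norm ((a*(1-a*d))^n)" and C="norm x" and D="norm x"])
    show "(\<lambda>n. root n (norm ((a*(1-a*d))^n))) \<longlonglongrightarrow> 0" using f(6) by (simp add: qnil_def)
    fix n :: nat assume n: "1 \<le> n"
    have xn: "x^(n+1) = x^n*x" by (simp only: Suc_eq_plus1[symmetric] power_Suc2)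
    have xx: "x = a^n*(x^n*x)" using xpow[of n] unfolding xn .
    have "(1-a*d)*x = (1-a*d)*(a^n*(x^n*x))" using arg_cong[OF xx, of "\<lambda>t. (1-a*d)*t"] .
    then have "(1-a*d)*x = (1-a*d)*a^n*(x^n*x)" by (simp only: mult.assoc)
    also have "\<dots> = (a*(1-a*d))^n * (x^n*x)" by (simp only: f(8)[OF n])
    finally have eq: "(1-a*d)*x = (a*(1-a*d))^n * (x^n*x)" .
    have h1: "norm (x^n*x) \<le> norm (x^n) * norm x" by (rule norm_mult_ineq)
    have h2: "norm (x^n) * norm x \<le> norm x^n * norm x" by (rule mult_right_mono[OF norm_power_ineq norm_ge_zero])
    have "norm ((1-a*d)*x) \<le> norm ((a*(1-a*d))^n) * norm (x^n*x)" unfolding eq by (rule norm_mult_ineq)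
    also have "\<dots> \<le> norm ((a*(1-a*d))^n) * (norm x ^ n * norm x)"
      by (rule mult_left_mono[OF order_trans[OF h1 h2] norm_ge_zero])
    finally show "norm ((1-a*d)*x) \<le> norm x * norm x ^ n * norm ((a*(1-a*d))^n)"
      by (simp add: mult_ac)
  qed simp_all
  then have "x - (a*d)*x = 0" by (simp only: left_diff_distrib mult_1_left)
  then have xe: "x = (a*d)*x" by (simp only: right_minus_eq)
  have xd: "(x*a-1)*d = 0"
  proof (rule small_zero[where r="\<lambda>n. norm (a ^ n - x * a ^ (n + 1))" and C="norm d" and D="norm d"])
    show "(\<lambda>n. root n (norm (a ^ n - x * a ^ (n + 1)))) \<longlonglongrightarrow> 0" by (fact lim)
    fix n :: nat assume n: "1 \<le> n"
    have "(x*a-1)*d = (x*a-1)*((a*d)*d)" by (simp only: f(4))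
    also have "\<dots> = (x*a-1)*((a^n*d^n)*d)" by (simp only: f(9)[OF n, symmetric])
    also have "\<dots> = (x*a-1)*(a^n*d^n)*d" by (simp only: mult.assoc)
    also have "\<dots> = - ((a ^ n - x * a ^ (n + 1)) * (d^n * d))"
      by (simp add: algebra_simps power_Suc)
    finally have eq: "(x*a-1)*d = - ((a ^ n - x * a ^ (n + 1)) * (d^n * d))" .
    have h1: "norm (d^n*d) \<le> norm (d^n) * norm d" by (rule norm_mult_ineq)
    have h2: "norm (d^n) * norm d \<le> norm d^n * norm d" by (rule mult_right_mono[OF norm_power_ineq norm_ge_zero])
    have "norm ((x*a-1)*d) \<le> norm (a ^ n - x * a ^ (n + 1)) * norm (d^n*d)"
      unfolding eq norm_minus_cancel by (rule norm_mult_ineq)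
    also have "\<dots> \<le> norm (a ^ n - x * a ^ (n + 1)) * (norm d ^ n * norm d)"
      by (rule mult_left_mono[OF order_trans[OF h1 h2] norm_ge_zero])
    finally show "norm ((x*a-1)*d) \<le> norm d * norm d ^ n * norm (a ^ n - x * a ^ (n + 1))"
      by (simp add: mult_ac)
  qed simp_all
  then have "x*a*d - d = 0" by (simp only: left_diff_distrib mult_1_left)
  then have xad: "x*a*d = d" by (simp only: right_minus_eq)
  from xe have xe': "x = (d*a)*x" by (subst (asm) f(1))
  have "x*a*x = x*a*((d*a)*x)" by (simp only: xe'[symmetric])
  also have "\<dots> = (x*a*d)*a*x" by (simp add: mult.assoc)
  also have "\<dots> = x" by (simp only: xad xe'[symmetric])
  finally show ?thesis using sa xd xe by (intro conjI)
qed

lemma cond2_to_gcEP: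
  fixes a x d :: "'a::complex_banach_star_algebra"
  assumes D: "is_gDrazin a d"
    and C: "x*a*x = x" "invol (a*x) = a*x" "(x*a - 1)*d = 0" "x = (a*d)*x"
  shows "is_gcEP a x"
proof -
  note f = drazin_facts[OF D]
  have "x*a*d - d = 0" using C(3) by (simp only: left_diff_distrib mult_1_left)
  then have xad: "x*a*d = d" by (simp only: right_minus_eq)
  have Pe: "(a*x)*(a*d) = a*d" using xad by (simp add: mult.assoc)
  have "a*(x*x) = (a*x)*x" by (simp only: mult.assoc)
  also have "\<dots> = (a*x)*((a*d)*x)" by (simp only: C(4)[symmetric])
  also have "\<dots> = ((a*x)*(a*d))*x" by (simp only: mult.assoc)
  also have "\<dots> = x" by (simp only: Pe C(4)[symmetric])
  finally have x2: "x = a*x^2" unfolding power2_eq_square by (rule sym)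
  have xae: "(1-x*a)*(a*d) = 0"
  proof -
    have "x*a*(a*d) = x*(a*(a*d))" by (simp only: mult.assoc)
    also have "\<dots> = x*((a*d)*a)" by (simp only: f(5))
    also have "\<dots> = (x*a*d)*a" by (simp only: mult.assoc)
    also have "\<dots> = d*a" by (simp only: xad)
    finally have h: "x*a*(a*d) = d*a" .
    have "(1-x*a)*(a*d) = a*d - x*a*(a*d)" by (simp add: left_diff_distrib)
    then show ?thesis using h f(1) by simp
  qed
  have lim: "(\<lambda>n. root n (norm (a ^ n - x * a ^ (n + 1)))) \<longlonglongrightarrow> 0"
  proof (rule root_bound[where r="\<lambda>n. norm ((a*(1-a*d))^n)" and C="norm (1-x*a) + 1"])
    show "(\<lambda>n. root n (norm ((a*(1-a*d))^n))) \<longlonglongrightarrow> 0" using f(6) by (simp add: qnil_def)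
    fix n :: nat assume n: "1 \<le> n"
    have "a ^ n - x * a ^ (n + 1) = (1-x*a)*a^n" by (simp add: algebra_simps power_Suc)
    also have "\<dots> = (1-x*a)*a^n*(1-a*d) + (1-x*a)*(a^n*(a*d))" by (simp add: algebra_simps)
    also have "\<dots> = (1-x*a)*a^n*(1-a*d) + ((1-x*a)*(a*d))*a^n" by (simp only: f(10) mult.assoc)
    also have "\<dots> = (1-x*a)*a^n*(1-a*d)" by (simp only: xae mult_zero_left add_0_right)
    also have "\<dots> = (1-x*a)*(a*(1-a*d))^n" using f(7)[OF n] by (simp add: mult.assoc)
    finally have "norm (a ^ n - x * a ^ (n + 1)) \<le> norm (1-x*a) * norm ((a*(1-a*d))^n)"
      by (simp add: norm_mult_ineq)
    also have "\<dots> \<le> (norm (1-x*a) + 1) * norm ((a*(1-a*d))^n)"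
      by (simp add: mult_right_mono)
    finally show "norm (a ^ n - x * a ^ (n + 1)) \<le> (norm (1-x*a) + 1) * norm ((a*(1-a*d))^n)" .
  qed (simp_all add: add_nonneg_pos)
  show ?thesis unfolding is_gcEP_def by (intro conjI x2 C(2) lim)
qed

lemma cond2_unique:
  fixes a x y d :: "'a::complex_banach_star_algebra"
  assumes D: "is_gDrazin a d"
    and C: "x*a*x = x" "invol (a*x) = a*x" "(x*a - 1)*d = 0" "x = (a*d)*x"
    and E: "y*a*y = y" "invol (a*y) = a*y" "(y*a - 1)*d = 0" "y = (a*d)*y"
  shows "x = y"
proof -
  note f = drazin_facts[OF D]
  have Pe: "(a*x)*(a*d) = a*d" using C(3) by (simp add: algebra_simps mult.assoc)
  have Qe: "(a*y)*(a*d) = a*d" using E(3) by (simp add: algebra_simps mult.assoc)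
  have eP: "(a*d)*(a*x) = a*x"
  proof -
    have "(a*d)*(a*x) = ((a*d)*a)*x" by (simp only: mult.assoc)
    also have "\<dots> = (a*(a*d))*x" by (simp only: f(5))
    also have "\<dots> = a*((a*d)*x)" by (simp only: mult.assoc)
    also have "\<dots> = a*x" by (simp only: C(4)[symmetric])
    finally show ?thesis .
  qed
  have eQ: "(a*d)*(a*y) = a*y"
  proof -
    have "(a*d)*(a*y) = ((a*d)*a)*y" by (simp only: mult.assoc)
    also have "\<dots> = (a*(a*d))*y" by (simp only: f(5))
    also have "\<dots> = a*((a*d)*y)" by (simp only: mult.assoc)
    also have "\<dots> = a*y" by (simp only: E(4)[symmetric])
    finally show ?thesis .
  qed
  have QP: "(a*y)*(a*x) = a*x"
  proof -
    have "(a*y)*(a*x) = ((a*y)*(a*d))*(a*x)" using eP by (simp only: mult.assoc)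
    also have "\<dots> = a*x" by (simp only: Qe eP)
    finally show ?thesis .
  qed
  have PQ: "(a*x)*(a*y) = a*y"
  proof -
    have "(a*x)*(a*y) = ((a*x)*(a*d))*(a*y)" using eQ by (simp only: mult.assoc)
    also have "\<dots> = a*y" by (simp only: Pe eQ)
    finally show ?thesis .
  qed
  have "a*x = invol ((a*y)*(a*x))" using QP C(2) by simp
  also have "\<dots> = (a*x)*(a*y)" using C(2) E(2) by (simp add: invol_mult)
  also have "\<dots> = a*y" by (fact PQ)
  finally have P: "a*x = a*y" .
  have "x = (a*d)*x" by (rule C(4))
  also have "\<dots> = d*(a*x)" by (simp only: f(1) mult.assoc)
  also have "\<dots> = d*(a*y)" using P by simp
  also have "\<dots> = (a*d)*y" by (simp only: f(1) mult.assoc)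
  also have "\<dots> = y" by (rule E(4)[symmetric])
  finally show ?thesis .
qed

lemma cond23:
  fixes a x d :: "'a::complex_banach_star_algebra"
  assumes D: "is_gDrazin a d" and xax: "x*a*x = x"
  shows "(invol (a*x) = a*x \<and> (x*a - 1)*d = 0 \<and> x = (a*d)*x) \<longleftrightarrow>
         (lann x = lann (invol x) \<and> lann (invol x) = lann d)"
proof -
  note f = drazin_facts[OF D]
  have PP: "(a*x)*(a*x) = a*x" using xax by (simp add: mult.assoc)
  have xs: "invol x = invol (a*x) * invol x"
  proof -
    have "invol x = invol (x*(a*x))" using xax by (simp add: mult.assoc)
    then show ?thesis by (simp only: invol_mult)
  qed
  have Ps: "invol (a*x) = invol x * invol a" by (rule invol_mult)
  have key: "eP \<and> Pe" if xd: "(x*a - 1)*d = 0" and xe: "x = (a*d)*x"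
    and "eP = ((a*d)*(a*x) = a*x)" and "Pe = ((a*x)*(a*d) = a*d)" for eP Pe
  proof -
    have "x*a*d - d = 0" using xd by (simp only: left_diff_distrib mult_1_left)
    then have xad: "x*a*d = d" by (simp only: right_minus_eq)
    have 1: "(a*x)*(a*d) = a*d" using xad by (simp add: mult.assoc)
    have "(a*d)*(a*x) = ((a*d)*a)*x" by (simp only: mult.assoc)
    also have "\<dots> = (a*(a*d))*x" by (simp only: f(5))
    also have "\<dots> = a*((a*d)*x)" by (simp only: mult.assoc)
    also have "\<dots> = a*x" by (simp only: xe[symmetric])
    finally show ?thesis using 1 that by simp
  qed
  show ?thesis
  proof
    assume S: "invol (a*x) = a*x \<and> (x*a - 1)*d = 0 \<and> x = (a*d)*x"
    then have sa: "invol (a*x) = a*x" and xd: "(x*a - 1)*d = 0" and xe: "x = (a*d)*x" by blast+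
    have "x*a*d - d = 0" using xd by (simp only: left_diff_distrib mult_1_left)
    then have xad: "x*a*d = d" by (simp only: right_minus_eq)
    from key[OF xd xe refl refl] have eP: "(a*d)*(a*x) = a*x" and Pe: "(a*x)*(a*d) = a*d" by blast+
    from xe have xe': "x = (d*a)*x" by (subst (asm) f(1))
    have A: "z*d = 0" if "z*x = 0" for z
    proof -
      have "z*d = (z*x)*a*d" using xad by (simp add: mult.assoc)
      then show ?thesis using that by simp
    qed
    have B: "z*x = 0" if "z*d = 0" for z
    proof -
      have "z*x = z*((d*a)*x)" by (simp only: xe'[symmetric])
      also have "\<dots> = (z*d)*a*x" by (simp only: mult.assoc)
      finally show ?thesis using that by simp
    qed
    have C: "z*(a*x) = 0" if "z*x = 0" for z
    proof -
      have "z*(a*d) = (z*d)*a" using f(1) by (simp add: mult.assoc)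
      then have zad: "z*(a*d) = 0" using A[OF that] by simp
      have "z*(a*x) = z*((a*d)*(a*x))" by (simp only: eP)
      also have "\<dots> = (z*(a*d))*(a*x)" by (simp only: mult.assoc)
      finally show ?thesis using zad by simp
    qed
    have E: "z*x = 0" if "z*(a*x) = 0" for z
    proof -
      have "z*(a*d) = z*((a*x)*(a*d))" by (simp only: Pe)
      also have "\<dots> = (z*(a*x))*(a*d)" by (simp only: mult.assoc)
      finally have zad: "z*(a*d) = 0" using that by simp
      have "z*x = z*((a*d)*x)" by (simp only: xe[symmetric])
      also have "\<dots> = (z*(a*d))*x" by (simp only: mult.assoc)
      finally show ?thesis using zad by simp
    qed
    have F: "z*invol x = 0 \<longleftrightarrow> z*(a*x) = 0" for z
    proof
      assume h: "z*invol x = 0"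
      have "z*(a*x) = z*invol (a*x)" using sa by simp
      also have "\<dots> = (z*invol x)*invol a" by (simp only: Ps mult.assoc)
      finally show "z*(a*x) = 0" using h by simp
    next
      assume h: "z*(a*x) = 0"
      have "z*invol x = z*(invol (a*x) * invol x)" by (simp only: xs[symmetric])
      also have "\<dots> = (z*(a*x))*invol x" by (simp only: sa mult.assoc)
      finally show "z*invol x = 0" using h by simp
    qed
    show "lann x = lann (invol x) \<and> lann (invol x) = lann d"
      unfolding lann_def using A B C E F by blast
  next
    assume L: "lann x = lann (invol x) \<and> lann (invol x) = lann d"
    have I1: "z*x = 0 \<longleftrightarrow> z*invol x = 0" for z
      using L unfolding lann_def by blast
    have I2: "z*invol x = 0 \<longleftrightarrow> z*d = 0" for z
      using L unfolding lann_def by blast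
    have "(x*a - 1)*x = x*a*x - x" by (simp add: left_diff_distrib)
    also have "\<dots> = 0" using xax by simp
    finally have xd: "(x*a - 1)*d = 0" using I1 I2 by blast
    have "(1 - a*d)*d = d - (a*d)*d" by (simp add: left_diff_distrib)
    also have "\<dots> = 0" using f(4) by simp
    finally have "(1 - a*d)*x = 0" using I1 I2 by blast
    then have "x - (a*d)*x = 0" by (simp only: left_diff_distrib mult_1_left)
    then have xe: "x = (a*d)*x" by (simp only: right_minus_eq)
    from key[OF xd xe refl refl] have eP: "(a*d)*(a*x) = a*x" and Pe: "(a*x)*(a*d) = a*d" by blast+
    have C: "z*(a*x) = 0" if "z*x = 0" for z
    proof -
      have "z*(a*d) = (z*d)*a" using f(1) by (simp add: mult.assoc)
      then have zad: "z*(a*d) = 0" using that I1 I2 by simp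
      have "z*(a*x) = z*((a*d)*(a*x))" by (simp only: eP)
      also have "\<dots> = (z*(a*d))*(a*x)" by (simp only: mult.assoc)
      finally show ?thesis using zad by simp
    qed
    have E: "z*x = 0" if "z*(a*x) = 0" for z
    proof -
      have "z*(a*d) = z*((a*x)*(a*d))" by (simp only: Pe)
      also have "\<dots> = (z*(a*x))*(a*d)" by (simp only: mult.assoc)
      finally have zad: "z*(a*d) = 0" using that by simp
      have "z*x = z*((a*d)*x)" by (simp only: xe[symmetric])
      also have "\<dots> = (z*(a*d))*x" by (simp only: mult.assoc)
      finally show ?thesis using zad by simp
    qed
    have F: "z*invol x = 0 \<longleftrightarrow> z*invol (a*x) = 0" for z
    proof
      assume h: "z*invol x = 0"
      have "z*invol (a*x) = (z*invol x)*invol a" by (simp only: Ps mult.assoc)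
      then show "z*invol (a*x) = 0" using h by simp
    next
      assume h: "z*invol (a*x) = 0"
      have "z*invol x = z*(invol (a*x) * invol x)" by (simp only: xs[symmetric])
      also have "\<dots> = (z*invol (a*x))*invol x" by (simp only: mult.assoc)
      finally show "z*invol x = 0" using h by simp
    qed
    have G: "z*(a*x) = 0 \<longleftrightarrow> z*invol (a*x) = 0" for z
      using C E F I1 by blast
    define P where "P = a*x"
    define Q where "Q = invol (a*x)"
    have PP': "P*P = P" using PP by (simp add: P_def)
    have QQ: "Q*Q = Q" unfolding Q_def by (simp only: invol_mult[symmetric] PP)
    have "(1-P)*P = 0" using PP' by (simp add: left_diff_distrib)
    then have "(1-P)*Q = 0" using G by (simp add: P_def Q_def)
    then have QPQ: "Q = P*Q" by (simp add: left_diff_distrib)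
    have "(1-Q)*Q = 0" using QQ by (simp add: left_diff_distrib)
    then have "(1-Q)*P = 0" using G by (simp add: P_def Q_def)
    then have PQP: "P = Q*P" by (simp add: left_diff_distrib)
    have "Q = invol P" by (simp add: P_def Q_def)
    also have "\<dots> = invol (Q*P)" using PQP by simp
    also have "\<dots> = invol P * invol Q" by (rule invol_mult)
    also have "\<dots> = Q * P" by (simp add: P_def Q_def invol_invol)
    also have "\<dots> = P" using PQP by simp
    finally have sa: "invol (a*x) = a*x" by (simp add: P_def Q_def)
    show "invol (a*x) = a*x \<and> (x*a - 1)*d = 0 \<and> x = (a*d)*x"
      using sa xd xe by (intro conjI)
  qed
qed

lemma gcEP_unique:
  fixes a x y :: "'a::complex_banach_star_algebra"
  assumes "has_gDrazin a" "is_gcEP a x" "is_gcEP a y"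
  shows "x = y"
proof -
  obtain d where D: "is_gDrazin a d" using assms(1) unfolding has_gDrazin_def by blast
  have cx: "x*a*x = x \<and> invol (a*x) = a*x \<and> (x*a - 1)*d = 0 \<and> x = (a*d)*x"
    by (rule gcEP_to_2[OF D assms(2)])
  have cy: "y*a*y = y \<and> invol (a*y) = a*y \<and> (y*a - 1)*d = 0 \<and> y = (a*d)*y"
    by (rule gcEP_to_2[OF D assms(3)])
  show ?thesis using cx cy
    by (elim conjE) (rule cond2_unique[OF D])
qed

theorem theorem2p1:
  fixes a x :: "'a::complex_banach_star_algebra"
  assumes "has_gDrazin a"
  shows "((has_gcEP a \<and> gcEP a = x) \<longleftrightarrow>
           (x * a * x = x \<and> invol (a * x) = a * x \<and> (x * a - 1) * gDrazin a = 0
            \<and> im x \<subseteq> im (gDrazin a)))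
       \<and> ((has_gcEP a \<and> gcEP a = x) \<longleftrightarrow>
           (x * a * x = x \<and> lann x = lann (invol x) \<and> lann (invol x) = lann (gDrazin a)))"
proof -
  obtain d where D: "is_gDrazin a d" using assms unfolding has_gDrazin_def by blast
  note f = drazin_facts[OF D]
  have gD: "gDrazin a = d" unfolding gDrazin_def
    by (rule the_equality[where P="is_gDrazin a", OF D]) (rule gDrazin_unique[OF _ D])
  have G: "(has_gcEP a \<and> gcEP a = x) \<longleftrightarrow> is_gcEP a x"
  proof
    assume h: "has_gcEP a \<and> gcEP a = x"
    then obtain y where y: "is_gcEP a y" unfolding has_gcEP_def by blast
    have "gcEP a = y" unfolding gcEP_def
      by (rule the_equality[where P="is_gcEP a", OF y]) (rule gcEP_unique[OF assms _ y])
    then show "is_gcEP a x" using h y by simp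
  next
    assume h: "is_gcEP a x"
    have "gcEP a = x" unfolding gcEP_def
      by (rule the_equality[where P="is_gcEP a", OF h]) (rule gcEP_unique[OF assms _ h])
    then show "has_gcEP a \<and> gcEP a = x" using h unfolding has_gcEP_def by blast
  qed
  have IM: "im x \<subseteq> im d \<longleftrightarrow> x = (a*d)*x"
  proof
    assume "im x \<subseteq> im d"
    moreover have "x \<in> im x" unfolding im_def by (rule CollectI, rule exI[of _ 1]) simp
    ultimately obtain w where w: "x = d*w" unfolding im_def by blast
    have "(a*d)*x = ((a*d)*d)*w" by (simp only: w mult.assoc)
    also have "\<dots> = d*w" by (simp only: f(4))
    finally show "x = (a*d)*x" using w by simp
  next
    assume xe: "x = (a*d)*x"
    show "im x \<subseteq> im d"
    proof
      fix y assume "y \<in> im x"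
      then obtain z where z: "y = x*z" unfolding im_def by blast
      have "x*z = ((d*a)*x)*z" using xe f(1) by (metis)
      also have "\<dots> = d*(a*x*z)" by (simp only: mult.assoc)
      finally show "y \<in> im d" unfolding im_def using z by blast
    qed
  qed
  have E2: "is_gcEP a x \<longleftrightarrow> (x*a*x = x \<and> invol (a*x) = a*x \<and> (x*a - 1)*d = 0 \<and> x = (a*d)*x)"
  proof
    assume "is_gcEP a x" then show "x*a*x = x \<and> invol (a*x) = a*x \<and> (x*a - 1)*d = 0 \<and> x = (a*d)*x"
      by (rule gcEP_to_2[OF D])
  next
    assume "x*a*x = x \<and> invol (a*x) = a*x \<and> (x*a - 1)*d = 0 \<and> x = (a*d)*x"
    then show "is_gcEP a x" by (elim conjE) (rule cond2_to_gcEP[OF D])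
  qed
  have E3: "is_gcEP a x \<longleftrightarrow> (x*a*x = x \<and> lann x = lann (invol x) \<and> lann (invol x) = lann d)"
    using E2 cond23[OF D] by blast
  show ?thesis unfolding G gD IM using E2 E3 by blast
qed
end
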